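(* Define, for $u>1$, $$D(u)=L(u)\int_0^1\frac{\ell(u,v)}{(u^2-v^2)^2}\,dv.$$ Then as $y\to\infty$, $$\int_1^\infty D(u)\cos(uy)\,du=O\Big(\frac{(\log y)^2}{y}\Big),\qquad\int_1^\infty uD(u)\sin(uy)\,du=O\Big(\frac{(\log y)^2}{y}\Big).$$
   Context: For $u>1$ let $L(u)=\log\frac{u+1}{u-1}$, and for $u\ge1$, $0<v\le1$ let $\ell(u,v)=\log\frac{1}{uv}$. *)

theory Defs
  imports "HOL-Analysis.Analysis" "HOL-Library.Landau_Symbols"
begin

definition L :: "real \<Rightarrow> real" where
  "L u = ln ((u + 1) / (u - 1))"

definition ell :: "real \<Rightarrow> real \<Rightarrow> real" where
  "ell u v = ln (1 / (u * v))"

definition D :: "real \<Rightarrow> real" where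
  "D u = L u * integral {0..1} (\<lambda>v. ell u v / (u\<^sup>2 - v\<^sup>2)\<^sup>2)"

end

theory Submission
  imports Defs "HOL-Real_Asymp.Real_Asymp"
begin


lemma shift_UNIV:
  fixes f :: "real \<Rightarrow> real"
  assumes "(f has_integral i) UNIV"
  shows "((\<lambda>x. f (x + c)) has_integral i) UNIV"
proof -
  have fa: "\<forall>a b. f integrable_on cbox a b" and
       fe: "\<forall>e>0. \<exists>B>0. \<forall>a b. ball 0 B \<subseteq> cbox a b \<longrightarrow> norm (integral (cbox a b) f - i) < e"
    using assms unfolding has_integral_alt'[of f i UNIV] by auto
  have eq: "(\<lambda>x. f (x + c)) = f \<circ> (+) c" by (auto simp: add.commute)
  show ?thesis unfolding has_integral_alt'[of _ i UNIV]
  proof (intro conjI allI impI)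
    fix a b :: real
    show "(\<lambda>x. if x \<in> UNIV then f (x + c) else 0) integrable_on cbox a b"
      using fa integrable_on_shift_Icc_real[of f c a b] by (simp add: eq)
  next
    fix e :: real assume "e > 0"
    then obtain B where B: "B > 0" "\<And>a b. ball 0 B \<subseteq> cbox a b \<Longrightarrow> norm (integral (cbox a b) f - i) < e"
      using fe by blast
    show "\<exists>B>0. \<forall>a b. ball 0 B \<subseteq> cbox a b \<longrightarrow>
            norm (integral (cbox a b) (\<lambda>x. if x \<in> UNIV then f (x + c) else 0) - i) < e"
    proof (intro exI[of _ "B + \<bar>c\<bar>"] conjI allI impI)
      show "B + \<bar>c\<bar> > 0" using B by simp
      fix a b :: real assume sub: "ball 0 (B + \<bar>c\<bar>) \<subseteq> cbox a b"
      have "ball 0 B \<subseteq> cbox (a + c) (b + c)"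
      proof
        fix x :: real assume "x \<in> ball 0 B"
        then have "x - c \<in> ball 0 (B + \<bar>c\<bar>)" by (auto simp: dist_real_def)
        then have "x - c \<in> cbox a b" using sub by blast
        then show "x \<in> cbox (a + c) (b + c)" by auto
      qed
      then have "norm (integral (cbox (a+c) (b+c)) f - i) < e" using B by blast
      moreover have "integral (cbox a b) (\<lambda>x. f (x + c)) = integral (cbox (a+c) (b+c)) f"
        using integral_shift_Icc_real[of a b f c] by (simp add: eq)
      ultimately show "norm (integral (cbox a b) (\<lambda>x. if x \<in> UNIV then f (x + c) else 0) - i) < e"
        by simp
    qed
  qed
qed

lemma FTC_left:
  fixes F f :: "real \<Rightarrow> real"
  assumes "a < b"
    and "\<And>x. a < x \<Longrightarrow> x \<le> b \<Longrightarrow> (F has_real_derivative f x) (at x)"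
    and "(F \<longlongrightarrow> F a) (at_right a)"
  shows "(f has_integral (F b - F a)) {a..b}"
proof (rule fundamental_theorem_of_calculus_interior)
  show "a \<le> b" using assms by simp
  show "continuous_on {a..b} F"
    unfolding continuous_on_def
  proof
    fix x assume x: "x \<in> {a..b}"
    show "(F \<longlongrightarrow> F x) (at x within {a..b})"
    proof (cases "x = a")
      case True
      then show ?thesis using assms(3) at_within_Icc_at_right[OF assms(1)] by simp
    next
      case False
      then have "isCont F x" using x assms(2) DERIV_isCont by force
      then show ?thesis by (metis at_le isCont_def subset_UNIV tendsto_mono)
    qed
  qed
  show "\<And>x. x \<in> {a<..<b} \<Longrightarrow> (F has_vector_derivative f x) (at x)"
    using assms(2) by (auto simp: has_real_derivative_iff_has_vector_derivative[symmetric])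
qed



lemma prod_integrable:
  fixes b g \<tau> :: "real \<Rightarrow> real"
  assumes bnn: "\<And>u. 1 < u \<Longrightarrow> 0 \<le> b u"
    and bint: "b integrable_on {1<..}"
    and gM: "\<And>u. 1 < u \<Longrightarrow> \<bar>g u\<bar> \<le> M"
    and gcont: "continuous_on {1<..} g"
    and tc: "\<And>t. isCont \<tau> t" and tb: "\<And>t. \<bar>\<tau> t\<bar> \<le> 1"
  shows "(\<lambda>u. b u * g u * \<tau> (u*y)) absolutely_integrable_on {1<..}"
proof -
  have babs: "b absolutely_integrable_on {1<..}"
    using bint bnn by (intro nonnegative_absolutely_integrable_1) auto
  have c1: "continuous_on {1<..} (\<lambda>u. \<tau> (u*y))"
    by (intro continuous_at_imp_continuous_on ballI continuous_intros isCont_o2[OF _ tc])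
  have cont: "continuous_on {1<..} (\<lambda>u. g u * \<tau> (u*y))"
    by (intro continuous_intros gcont c1)
  have meas: "(\<lambda>u. g u * \<tau> (u*y)) \<in> borel_measurable (lebesgue_on {1<..})"
    by (rule continuous_imp_measurable_on_sets_lebesgue[OF cont]) simp
  have bdd: "bounded ((\<lambda>u. g u * \<tau> (u*y)) ` {1<..})"
    unfolding bounded_real
  proof (intro exI[of _ M] ballI)
    fix x assume "x \<in> (\<lambda>u. g u * \<tau> (u*y)) ` {1<..}"
    then obtain u where u: "1 < u" "x = g u * \<tau> (u*y)" by auto
    have "\<bar>g u * \<tau> (u*y)\<bar> = \<bar>g u\<bar> * \<bar>\<tau> (u*y)\<bar>" by (simp add: abs_mult)
    also have "\<dots> \<le> M * 1" using gM[OF u(1)] tb[of "u*y"]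
      by (intro mult_mono) auto
    finally show "\<bar>x\<bar> \<le> M" using u by simp
  qed
  have "(\<lambda>u. (g u * \<tau> (u*y)) * b u) absolutely_integrable_on {1<..}"
    by (rule absolutely_integrable_bounded_measurable_product_real[OF meas _ bdd babs]) simp
  moreover have "(\<lambda>u. (g u * \<tau> (u*y)) * b u) = (\<lambda>u. b u * g u * \<tau> (u*y))"
    by (auto simp: mult_ac)
  ultimately show ?thesis by simp
qed



lemma shift_bound:
  fixes b g \<tau> :: "real \<Rightarrow> real" and M K y :: real
  assumes bnn: "\<And>u. 1 < u \<Longrightarrow> 0 \<le> b u"
    and bmono: "\<And>u w. 1 < u \<Longrightarrow> u \<le> w \<Longrightarrow> b w \<le> b u"
    and bint: "b integrable_on {1<..}"
    and bint2: "b integrable_on {1<..1+pi/y}"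
    and gM: "\<And>u. 1 < u \<Longrightarrow> \<bar>g u\<bar> \<le> M"
    and gK: "\<And>u w. 1 < u \<Longrightarrow> 1 < w \<Longrightarrow> \<bar>g u - g w\<bar> \<le> K * \<bar>u - w\<bar>"
    and gcont: "continuous_on {1<..} g"
    and tc: "\<And>t. isCont \<tau> t" and tb: "\<And>t. \<bar>\<tau> t\<bar> \<le> 1" and tpi: "\<And>t. \<tau> (t + pi) = - \<tau> t"
    and y: "0 < y" and M0: "0 \<le> M" and K0: "0 \<le> K"
  shows "\<bar>integral {1<..} (\<lambda>u. b u * g u * \<tau> (u*y))\<bar>
           \<le> M * integral {1<..1+pi/y} b + K*(pi/y)/2 * integral {1<..} b"
proof -
  define h where "h = pi / y"
  have h0: "0 < h" using y by (simp add: h_def)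
  have hy: "h * y = pi" using y by (simp add: h_def)
  define I where "I = integral {1<..} (\<lambda>u. b u * g u * \<tau> (u*y))"
  define J where "J = integral {1<..} b"
  define W where "W = integral {1<..1+h} b"
  define P0 where "P0 = (\<lambda>u. if 1 < u then b u * g u else 0)"
  define b0 where "b0 = (\<lambda>u. if 1 < u then b u else 0)"
  define c0 where "c0 = (\<lambda>u. if u \<in> {1<..1+h} then b u else 0)"
  have Fint: "(\<lambda>u. b u * g u * \<tau> (u*y)) integrable_on {1<..}"
    using prod_integrable[OF bnn bint gM gcont tc tb, of y] set_lebesgue_integral_eq_integral(1)
    absolutely_integrable_on_def by blast
  have F0: "((\<lambda>u. P0 u * \<tau> (u*y)) has_integral I) UNIV"
  proof -
    have "((\<lambda>u. if u \<in> {1<..} then b u * g u * \<tau> (u*y) else 0) has_integral I) UNIV"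
      unfolding has_integral_restrict_UNIV I_def using Fint by (simp add: has_integral_integral)
    moreover have "(\<lambda>u. if u \<in> {1<..} then b u * g u * \<tau> (u*y) else 0) = (\<lambda>u. P0 u * \<tau> (u*y))"
      by (auto simp: P0_def)
    ultimately show ?thesis by simp
  qed
  have F1: "((\<lambda>u. - (P0 (u + h) * \<tau> (u*y))) has_integral I) UNIV"
  proof -
    have "((\<lambda>u. P0 (u + h) * \<tau> ((u + h)*y)) has_integral I) UNIV"
      using shift_UNIV[OF F0, of h] by simp
    moreover have "\<tau> ((u + h)*y) = - \<tau> (u*y)" for u
      using tpi[of "u*y"] hy by (simp add: distrib_right)
    ultimately show ?thesis by simp
  qed
  have Diff: "((\<lambda>u. P0 u * \<tau> (u*y) - P0 (u + h) * \<tau> (u*y)) has_integral (I + I)) UNIV"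
    using has_integral_add[OF F0 F1] by simp
  have B0: "(b0 has_integral J) UNIV"
  proof -
    have "((\<lambda>u. if u \<in> {1<..} then b u else 0) has_integral J) UNIV"
      unfolding has_integral_restrict_UNIV J_def using bint by (simp add: has_integral_integral)
    then show ?thesis by (simp add: b0_def)
  qed
  have B1: "((\<lambda>u. b0 (u + h)) has_integral J) UNIV" using shift_UNIV[OF B0] .
  have C0: "(c0 has_integral W) UNIV"
    unfolding c0_def has_integral_restrict_UNIV W_def h_def using bint2 by (simp add: has_integral_integral)
  have C1: "((\<lambda>u. c0 (u + h)) has_integral W) UNIV" using shift_UNIV[OF C0] .
  define G where "G = (\<lambda>u. M * (b0 u - b0 (u + h) + 2 * c0 (u + h)) + K * h * b0 (u + h))"
  have Gint: "(G has_integral (M * (J - J + 2 * W) + K * h * J)) UNIV"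
    unfolding G_def
    by (intro has_integral_add has_integral_mult_right has_integral_diff B0 B1 C1)
  have bound: "norm (P0 u * \<tau> (u*y) - P0 (u + h) * \<tau> (u*y)) \<le> G u" for u
  proof -
    have "norm (P0 u * \<tau> (u*y) - P0 (u + h) * \<tau> (u*y)) = \<bar>P0 u - P0 (u + h)\<bar> * \<bar>\<tau> (u*y)\<bar>"
      by (simp add: abs_mult left_diff_distrib[symmetric])
    also have "\<dots> \<le> \<bar>P0 u - P0 (u + h)\<bar>"
      using tb[of "u*y"] by (simp add: mult_left_le)
    also have "\<dots> \<le> G u"
    proof (cases "1 < u")
      case True
      then have u1: "1 < u" "1 < u + h" using h0 by auto
      have c0z: "c0 (u + h) = 0" using True by (simp add: c0_def)
      have mono: "b (u + h) \<le> b u" using bmono[of u "u+h"] True h0 by simp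
      have "P0 u - P0 (u + h) = (b u - b (u + h)) * g u + b (u + h) * (g u - g (u + h))"
        using u1 by (simp add: P0_def algebra_simps)
      then have "\<bar>P0 u - P0 (u + h)\<bar> \<le> \<bar>(b u - b (u + h)) * g u\<bar> + \<bar>b (u + h) * (g u - g (u + h))\<bar>"
        by simp
      also have "\<bar>(b u - b (u + h)) * g u\<bar> \<le> (b u - b (u + h)) * M"
        using mono gM[OF u1(1)] by (simp add: abs_mult mult_left_mono)
      also have "\<bar>b (u + h) * (g u - g (u + h))\<bar> \<le> b (u + h) * (K * h)"
      proof -
        have "\<bar>g u - g (u + h)\<bar> \<le> K * h" using gK[OF u1] h0 by simp
        then show ?thesis using bnn[OF u1(2)] by (simp add: abs_mult mult_left_mono)
      qed
      finally show ?thesis using u1 c0z by (simp add: G_def b0_def algebra_simps)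
    next
      case False
      show ?thesis
      proof (cases "1 < u + h")
        case True
        have "\<bar>P0 u - P0 (u + h)\<bar> = \<bar>b (u + h)\<bar> * \<bar>g (u + h)\<bar>"
          using False True by (simp add: P0_def abs_mult)
        also have "\<dots> \<le> b (u + h) * M"
          using bnn[OF True] gM[OF True] by (simp add: mult_left_mono)
        also have "\<dots> \<le> G u"
          using False True h0 bnn[OF True] K0 M0
          by (simp add: G_def b0_def c0_def algebra_simps)
        finally show ?thesis .
      next
        case False2: False
        then show ?thesis using False by (simp add: G_def P0_def b0_def c0_def)
      qed
    qed
    finally show ?thesis .
  qed
  have "norm (integral UNIV (\<lambda>u. P0 u * \<tau> (u*y) - P0 (u + h) * \<tau> (u*y))) \<le> integral UNIV G"
    using Diff Gint bound by (intro integral_norm_bound_integral) (auto simp: has_integral_integrable)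
  then have "\<bar>I + I\<bar> \<le> M * (J - J + 2 * W) + K * h * J"
    using Diff Gint by (simp add: integral_unique)
  then have "\<bar>I\<bar> \<le> M * W + K * h / 2 * J" by simp
  then show ?thesis by (simp add: I_def W_def J_def h_def)
qed



lemma maj_integrable:
  fixes f g :: "real \<Rightarrow> real"
  assumes "f \<in> borel_measurable (lebesgue_on S)" "S \<in> sets lebesgue"
    "g integrable_on S" "\<And>x. x \<in> S \<Longrightarrow> \<bar>f x\<bar> \<le> g x"
  shows "f absolutely_integrable_on S" "f integrable_on S"
proof -
  show *: "f absolutely_integrable_on S"
    using assms by (intro measurable_bounded_by_integrable_imp_absolutely_integrable) auto
  show "f integrable_on S"
    using * set_lebesgue_integral_eq_integral(1) absolutely_integrable_on_def by blast
qed

lemma L_pos: "1 < u \<Longrightarrow> 0 < L u"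
  unfolding L_def by (simp add: divide_simps)

lemma L_upper: "1 < u \<Longrightarrow> L u \<le> 2 / (u - 1)"
proof -
  assume u: "1 < u"
  have "L u \<le> (u + 1) / (u - 1) - 1" unfolding L_def
    using u by (intro ln_le_minus_one) (simp add: divide_simps)
  also have "\<dots> = 2 / (u - 1)" using u by (simp add: field_simps)
  finally show ?thesis .
qed

lemma L_lower: "1 < u \<Longrightarrow> 2 / (u + 1) \<le> L u"
proof -
  assume u: "1 < u"
  have "ln ((u - 1) / (u + 1)) \<le> (u - 1) / (u + 1) - 1"
    using u by (intro ln_le_minus_one) simp
  moreover have "ln ((u - 1) / (u + 1)) = - L u"
    unfolding L_def using u by (simp add: ln_div)
  moreover have "(u - 1) / (u + 1) - 1 = - (2 / (u + 1))" using u by (simp add: field_simps)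
  ultimately show ?thesis by simp
qed

lemma L_near1: "1 < u \<Longrightarrow> u \<le> 2 \<Longrightarrow> L u \<le> 2 - ln (u - 1)"
proof -
  assume u: "1 < u" "u \<le> 2"
  have "L u = ln (u + 1) - ln (u - 1)" unfolding L_def using u by (simp add: ln_div)
  moreover have "ln (u + 1) \<le> u" using ln_le_minus_one[of "u+1"] u by simp
  ultimately show ?thesis using u by simp
qed

lemma L_mono: "1 < u \<Longrightarrow> u \<le> w \<Longrightarrow> L w \<le> L u"
proof -
  assume u: "1 < u" "u \<le> w"
  have e: "(x + 1) / (x - 1) = 1 + 2 / (x - 1)" if "1 < x" for x :: real
    using that by (simp add: field_simps)
  have "2 / (w - 1) \<le> 2 / (u - 1)" using u by (intro divide_left_mono) auto
  then have "(w + 1) / (w - 1) \<le> (u + 1) / (u - 1)" using e[of u] e[of w] u by simp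
  moreover have "0 < (w + 1) / (w - 1)" using u by simp
  ultimately show ?thesis unfolding L_def by simp
qed

lemma L_cont: "continuous_on {1<..} L"
proof -
  have "continuous_on {1<..} (\<lambda>u::real. ln ((u + 1) / (u - 1)))"
    by (intro continuous_on_ln continuous_intros) (auto simp: field_simps)
  then show ?thesis unfolding L_def[abs_def] .
qed

definition Phi :: "real \<Rightarrow> real" where
  "Phi h = 9 * h + 2 * (h * (ln h)^2 - 2 * h * ln h + 2 * h)"

lemma maj_has_integral:
  assumes "0 < h"
  shows "((\<lambda>u. 9 + 2 * (ln (u - 1))^2) has_integral Phi h) {1..1+h}"
proof -
  define F where "F = (\<lambda>u::real. 9 * (u-1) + 2 * ((u-1) * (ln (u-1))^2 - 2 * (u-1) * ln (u-1) + 2 * (u-1)))"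
  have "((\<lambda>u. 9 + 2 * (ln (u - 1))^2) has_integral (F (1+h) - F 1)) {1..1+h}"
  proof (rule FTC_left)
    show "1 < 1 + h" using assms by simp
    fix x :: real assume x: "1 < x" "x \<le> 1 + h"
    show "(F has_real_derivative 9 + 2 * (ln (x - 1))^2) (at x)"
      unfolding F_def using x
      apply (intro derivative_eq_intros)
      apply (auto simp: power2_eq_square)
      apply (simp add: divide_simps)
      done
  next
    show "(F \<longlongrightarrow> F 1) (at_right 1)"
      unfolding F_def by real_asymp
  qed
  moreover have "F (1+h) - F 1 = Phi h" by (simp add: F_def Phi_def)
  ultimately show ?thesis by simp
qed

lemma Lsq_near1: "1 < u \<Longrightarrow> u \<le> 2 \<Longrightarrow> (L u)^2 \<le> 9 + 2 * (ln (u - 1))^2"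
proof -
  assume u: "1 < u" "u \<le> 2"
  have a: "0 \<le> L u" using L_pos[OF u(1)] by simp
  have "(L u)^2 \<le> (2 - ln (u - 1))^2" using L_near1[OF u] a by (intro power_mono) auto
  also have "\<dots> \<le> 9 + 2 * (ln (u - 1))^2"
  proof -
    have "0 \<le> (ln (u - 1) + 2)^2" by simp
    then show ?thesis unfolding power2_eq_square by (simp add: algebra_simps)
  qed
  finally show ?thesis .
qed



lemma Icc_to_Ioc:
  fixes f :: "real \<Rightarrow> real"
  assumes "(f has_integral y) {a..b}"
  shows "(f has_integral y) {a<..b}"
proof -
  have "negligible {x \<in> {a..b} - {a<..b}. f x \<noteq> 0}"
    by (rule negligible_subset[of "{a}"]) auto
  moreover have "negligible {x \<in> {a<..b} - {a..b}. f x \<noteq> 0}"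
    by (rule negligible_subset[of "{}"]) auto
  ultimately show ?thesis using has_integral_spike_set_eq assms by blast
qed

lemma Lsq_meas:
  assumes "S \<subseteq> {1<..}" "S \<in> sets lebesgue"
  shows "(\<lambda>u. (L u)^2) \<in> borel_measurable (lebesgue_on S)"
proof -
  have "continuous_on S (\<lambda>u. (L u)^2)"
    by (intro continuous_intros continuous_on_subset[OF L_cont assms(1)])
  then show ?thesis using continuous_imp_measurable_on_sets_lebesgue assms(2) by blast
qed

lemma Lsq_Ioc:
  assumes "0 < h" "h \<le> 1"
  shows "(\<lambda>u. (L u)^2) integrable_on {1<..1+h}" "integral {1<..1+h} (\<lambda>u. (L u)^2) \<le> Phi h"
proof -
  have m: "((\<lambda>u. 9 + 2 * (ln (u - 1))^2) has_integral Phi h) {1<..1+h}"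
    by (rule Icc_to_Ioc[OF maj_has_integral[OF assms(1)]])
  have b: "\<bar>(L u)^2\<bar> \<le> 9 + 2 * (ln (u - 1))^2" if "u \<in> {1<..1+h}" for u
    using Lsq_near1[of u] that assms by auto
  show i: "(\<lambda>u. (L u)^2) integrable_on {1<..1+h}"
    by (rule maj_integrable(2)[OF Lsq_meas _ _ b]) (use m in \<open>auto simp: has_integral_integrable\<close>)
  have "integral {1<..1+h} (\<lambda>u. (L u)^2) \<le> integral {1<..1+h} (\<lambda>u. 9 + 2 * (ln (u - 1))^2)"
    using b i m by (intro integral_le) (auto simp: has_integral_integrable)
  also have "\<dots> = Phi h" using m by (simp add: integral_unique)
  finally show "integral {1<..1+h} (\<lambda>u. (L u)^2) \<le> Phi h" .
qed

lemma Lsq_int: "(\<lambda>u. (L u)^2) integrable_on {1<..}"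
proof -
  have a: "(\<lambda>u. (L u)^2) integrable_on {1<..2}" using Lsq_Ioc[of 1] by simp
  have m: "((\<lambda>x. 16 * (1 / x ^ 2)) has_integral 16 * (1 / (real (2 - 1) * 2 ^ (2 - 1)))) {2..}"
    by (intro has_integral_mult_right has_integral_inverse_power_to_inf) auto
  have bd: "\<bar>(L u)^2\<bar> \<le> 16 * (1 / u ^ 2)" if "u \<in> {2..}" for u
  proof -
    have u: "2 \<le> u" using that by simp
    have "L u \<le> 2 / (u - 1)" using L_upper u by simp
    also have "\<dots> \<le> 4 / u" using u by (simp add: divide_simps)
    finally have "(L u)^2 \<le> (4 / u)^2" using L_pos[of u] u by (intro power_mono) auto
    then show ?thesis by (simp add: power_divide)
  qed
  have b: "(\<lambda>u. (L u)^2) integrable_on {2..}"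
    by (rule maj_integrable(2)[OF Lsq_meas _ _ bd]) (use m in \<open>auto simp: has_integral_integrable\<close>)
  show ?thesis
    by (rule integrable_Un'[OF a b]) (auto intro: negligible_subset[of "{2}"])
qed



definition Psi :: "real \<Rightarrow> real" where "Psi y = Phi (pi / y) + pi / y"

definition IL :: real where "IL = integral {1<..} (\<lambda>u. (L u)^2)"

lemma IL_nonneg: "0 \<le> IL"
  unfolding IL_def using Lsq_int by (intro integral_nonneg) auto

lemma Phi_nonneg: "0 < h \<Longrightarrow> h \<le> 1 \<Longrightarrow> 0 \<le> Phi h"
proof -
  assume h: "0 < h" "h \<le> 1"
  have "ln h \<le> 0" using h by simp
  then have "h * ln h \<le> 0" using h by (simp add: mult_nonneg_nonpos)
  then have "2 * h * ln h \<le> 0" by simp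
  moreover have "0 \<le> h * (ln h)^2" using h by simp
  ultimately show ?thesis unfolding Phi_def using h by (smt (verit))
qed

lemma base_meas:
  fixes b :: "real \<Rightarrow> real"
  assumes bmono: "\<And>u w. 1 < u \<Longrightarrow> u \<le> w \<Longrightarrow> b w \<le> b u" and S: "S \<subseteq> {1<..}"
  shows "b \<in> borel_measurable (lebesgue_on S)"
proof -
  have "mono_on S (\<lambda>u. - b u)"
    unfolding mono_on_def using bmono S by force
  then have "(\<lambda>u. - b u) \<in> borel_measurable (restrict_space borel S)"
    by (rule borel_measurable_mono_on_fnc)
  moreover have "space lborel = space lebesgue" "sets borel \<subseteq> sets lebesgue"
    by force+
  ultimately have "(\<lambda>u. - b u) \<in> borel_measurable (lebesgue_on S)"
    by (metis borel_measurable_subalgebra mono_restrict_space space_lborel space_restrict_space)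
  then have "(\<lambda>u. - (- b u)) \<in> borel_measurable (lebesgue_on S)"
    by (rule borel_measurable_uminus)
  then show ?thesis by simp
qed

lemma piece:
  fixes b g \<tau> :: "real \<Rightarrow> real" and M K c :: real
  assumes bnn: "\<And>u. 1 < u \<Longrightarrow> 0 \<le> b u"
    and ble: "\<And>u. 1 < u \<Longrightarrow> b u \<le> c * (L u)^2"
    and bmono: "\<And>u w. 1 < u \<Longrightarrow> u \<le> w \<Longrightarrow> b w \<le> b u"
    and gM: "\<And>u. 1 < u \<Longrightarrow> \<bar>g u\<bar> \<le> M"
    and gK: "\<And>u w. 1 < u \<Longrightarrow> 1 < w \<Longrightarrow> \<bar>g u - g w\<bar> \<le> K * \<bar>u - w\<bar>"
    and gcont: "continuous_on {1<..} g"
    and tc: "\<And>t. isCont \<tau> t" and tb: "\<And>t. \<bar>\<tau> t\<bar> \<le> 1" and tpi: "\<And>t. \<tau> (t + pi) = - \<tau> t"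
    and M0: "0 \<le> M" and K0: "0 \<le> K" and c0: "0 \<le> c"
  shows "(\<lambda>u. b u * g u * \<tau> (u*y)) integrable_on {1<..}"
    and "pi \<le> y \<Longrightarrow> \<bar>integral {1<..} (\<lambda>u. b u * g u * \<tau> (u*y))\<bar> \<le> (M*c + K*c*IL/2) * Psi y"
proof -
  have bintS: "b integrable_on S" if "S \<subseteq> {1<..}" "S \<in> sets lebesgue"
     "(\<lambda>u. c * (L u)^2) integrable_on S" for S
    by (rule maj_integrable(2)[OF base_meas[OF bmono that(1)] that(2) that(3)])
       (use that bnn ble in auto)
  have bint: "b integrable_on {1<..}"
    by (rule bintS) (auto intro: integrable_on_mult_right[OF Lsq_int])
  have bint2: "b integrable_on {1<..1+h}" if "0 < h" "h \<le> 1" for h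
    by (rule bintS) (use that in \<open>auto intro: integrable_on_mult_right Lsq_Ioc\<close>)
  show "(\<lambda>u. b u * g u * \<tau> (u*y)) integrable_on {1<..}"
    using prod_integrable[OF bnn bint gM gcont tc tb, of y] set_lebesgue_integral_eq_integral(1)
    absolutely_integrable_on_def by blast
  assume y: "pi \<le> y"
  have y0: "0 < y" using y pi_gt_zero by linarith
  define h where "h = pi / y"
  have h: "0 < h" "h \<le> 1" using y y0 by (auto simp: h_def)
  have sb: "\<bar>integral {1<..} (\<lambda>u. b u * g u * \<tau> (u*y))\<bar>
           \<le> M * integral {1<..1+pi/y} b + K*(pi/y)/2 * integral {1<..} b"
    by (rule shift_bound[OF bnn bmono bint bint2[OF h[unfolded h_def]] gM gK gcont tc tb tpi y0 M0 K0])
  have W: "integral {1<..1+h} b \<le> c * Phi h"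
  proof -
    have "integral {1<..1+h} b \<le> integral {1<..1+h} (\<lambda>u. c * (L u)^2)"
      using bint2[OF h] Lsq_Ioc(1)[OF h] ble by (intro integral_le) (auto intro: integrable_on_mult_right)
    also have "\<dots> = c * integral {1<..1+h} (\<lambda>u. (L u)^2)" by simp
    also have "\<dots> \<le> c * Phi h" using Lsq_Ioc(2)[OF h] c0 by (intro mult_left_mono) auto
    finally show ?thesis .
  qed
  have J: "integral {1<..} b \<le> c * IL"
  proof -
    have "integral {1<..} b \<le> integral {1<..} (\<lambda>u. c * (L u)^2)"
      using bint Lsq_int ble by (intro integral_le) (auto intro: integrable_on_mult_right)
    also have "\<dots> = c * IL" by (simp add: IL_def)
    finally show ?thesis .
  qed
  have "M * integral {1<..1+h} b + K*h/2 * integral {1<..} b \<le> M * (c * Phi h) + K*h/2 * (c * IL)"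
    using W J M0 K0 h by (intro add_mono mult_left_mono) auto
  also have "\<dots> \<le> (M*c + K*c*IL/2) * (Phi h + h)"
  proof -
    have p: "0 \<le> Phi h" using Phi_nonneg h by simp
    have "0 \<le> K*c*IL/2 * Phi h" using p K0 c0 IL_nonneg by simp
    moreover have "0 \<le> M*c*h" using M0 c0 h by simp
    moreover have "(M*c + K*c*IL/2) * (Phi h + h) = M*(c*Phi h) + K*h/2*(c*IL) + (M*c*h + K*c*IL/2*Phi h)"
      by (simp add: algebra_simps)
    ultimately show ?thesis by linarith
  qed
  finally show "\<bar>integral {1<..} (\<lambda>u. b u * g u * \<tau> (u*y))\<bar> \<le> (M*c + K*c*IL/2) * Psi y"
    using sb by (simp add: Psi_def h_def)
qed



lemma neglog_int: "((\<lambda>v. - ln v) has_integral 1) {0..1::real}"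
proof -
  define F where "F = (\<lambda>v::real. v - v * ln v)"
  have "((\<lambda>v. - ln v) has_integral (F 1 - F 0)) {0..1::real}"
  proof (rule FTC_left)
    fix x :: real assume x: "0 < x" "x \<le> 1"
    show "(F has_real_derivative - ln x) (at x)"
      unfolding F_def using x
      by (auto intro!: derivative_eq_intros)
  next
    show "(F \<longlongrightarrow> F 0) (at_right 0)" unfolding F_def by real_asymp
  qed simp
  then show ?thesis by (simp add: F_def)
qed

lemma wlog_int:
  fixes f :: "real \<Rightarrow> real"
  assumes "continuous_on {0..1} f"
  shows "(\<lambda>v. f v * - ln v) integrable_on {0..1}"
proof -
  have g: "(\<lambda>v::real. - ln v) absolutely_integrable_on {0..1}"
  proof (rule nonnegative_absolutely_integrable_1)
    show "(\<lambda>v::real. - ln v) integrable_on {0..1}" using neglog_int by (auto simp: has_integral_integrable)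
    fix x :: real assume "x \<in> {0..1}"
    then show "0 \<le> - ln x" by (cases "x = 0") auto
  qed
  have m: "f \<in> borel_measurable (lebesgue_on {0..1})"
    by (rule continuous_imp_measurable_on_sets_lebesgue[OF assms]) simp
  have b: "bounded (f ` {0..1})"
    by (intro compact_imp_bounded compact_continuous_image assms) simp
  have "(\<lambda>v. f v * - ln v) absolutely_integrable_on {0..1}"
    by (rule absolutely_integrable_bounded_measurable_product_real[OF m _ b g]) simp
  then show ?thesis
    using set_lebesgue_integral_eq_integral(1) absolutely_integrable_on_def by blast
qed

definition B0 :: "real \<Rightarrow> real" where
  "B0 u = integral {0..1} (\<lambda>v. - ln v / (u\<^sup>2 - v\<^sup>2)\<^sup>2)"

lemma B0_int:
  fixes u :: real
  assumes u: "1 < u"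
  shows "(\<lambda>v. - ln v / (u\<^sup>2 - v\<^sup>2)\<^sup>2) integrable_on {0..1}"
    and "(\<lambda>v. - ln v * u / (u\<^sup>2 - v\<^sup>2)\<^sup>2) integrable_on {0..1}"
proof -
  have pos: "0 < u\<^sup>2 - v\<^sup>2" if "v \<in> {0..1}" for v
  proof -
    have "v\<^sup>2 \<le> 1" using that mult_left_le[of v v] by (auto simp: power2_eq_square)
    moreover have "1 < u\<^sup>2" using u by (simp add: one_less_power)
    ultimately show ?thesis by simp
  qed
  have nz: "\<forall>v\<in>{0..1}. (u\<^sup>2 - v\<^sup>2)\<^sup>2 \<noteq> 0" using pos by force
  have c1: "continuous_on {0..1} (\<lambda>v. 1 / (u\<^sup>2 - v\<^sup>2)\<^sup>2)"
    by (intro continuous_intros) (use nz in blast)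
  have c2: "continuous_on {0..1} (\<lambda>v. u / (u\<^sup>2 - v\<^sup>2)\<^sup>2)"
    by (intro continuous_intros) (use nz in blast)
  show "(\<lambda>v. - ln v / (u\<^sup>2 - v\<^sup>2)\<^sup>2) integrable_on {0..1}"
    using wlog_int[OF c1] by simp
  show "(\<lambda>v. - ln v * u / (u\<^sup>2 - v\<^sup>2)\<^sup>2) integrable_on {0..1}"
    using wlog_int[OF c2] by (simp add: mult.commute)
qed

lemma G_int:
  fixes u :: real
  assumes u: "1 < u"
  shows "((\<lambda>v. - ln v / (u - v)\<^sup>2) has_integral ln (u / (u - 1)) / u) {0..1}"
proof -
  define G where "G = (\<lambda>v::real. - ((v * ln v) / (u * (u - v))) - ln (u - v) / u)"
  have "((\<lambda>v. - ln v / (u - v)\<^sup>2) has_integral (G 1 - G 0)) {0..1::real}"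
  proof (rule FTC_left)
    fix x :: real assume x: "0 < x" "x \<le> 1"
    have ux: "u - x \<noteq> 0" "u \<noteq> 0" "0 < u - x" using x u by auto
    have d1: "((\<lambda>v. v * ln v) has_real_derivative (1 * ln x + inverse x * x)) (at x)"
      by (rule DERIV_mult[OF DERIV_ident DERIV_ln[OF x(1)]])
    have d2: "((\<lambda>v. u * (u - v)) has_real_derivative (u * (0 - 1))) (at x)"
      by (intro DERIV_cmult DERIV_diff DERIV_const DERIV_ident)
    have d3: "((\<lambda>v. ln (u - v)) has_real_derivative ((0 - 1) / (u - x))) (at x)"
      using ux by (auto intro!: derivative_eq_intros)
    define E where "E = - ((((1 * ln x + inverse x * x) * (u * (u - x)) - x * ln x * (u * (0 - 1))) / (u * (u - x) * (u * (u - x)))))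
         - (((0 - 1) / (u - x)) * u - ln (u - x) * 0) / (u * u)"
    have d: "(G has_real_derivative E) (at x)"
      unfolding G_def E_def
      by (rule DERIV_diff[OF DERIV_minus[OF DERIV_divide[OF d1 d2]] DERIV_divide[OF d3 DERIV_const]]) (use ux in auto)
    have e: "E = - ln x / (u - x)\<^sup>2"
    proof -
      have ix: "inverse x * x = 1" using x by simp
      have "E = - (((ln x + 1) * (u * (u - x)) + x * ln x * u) / (u * (u - x) * (u * (u - x))))
                 + 1 / (u * (u - x))"
        unfolding E_def ix using ux by (simp add: field_simps)
      also have "((ln x + 1) * (u * (u - x)) + x * ln x * u) = u * (u * ln x + (u - x))"
        by (simp add: algebra_simps)
      also have "u * (u * ln x + (u - x)) / (u * (u - x) * (u * (u - x))) = (u * ln x + (u - x)) / (u * (u - x) * (u - x))"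
        using ux by simp
      also have "1 / (u * (u - x)) = (u - x) / (u * (u - x) * (u - x))"
        using ux by simp
      finally have "E = (- (u * ln x + (u - x)) + (u - x)) / (u * (u - x) * (u - x))"
        by (simp add: add_divide_distrib diff_divide_distrib)
      also have "\<dots> = - ln x / (u - x)\<^sup>2"
        using ux by (simp add: power2_eq_square)
      finally show ?thesis .
    qed
    show "(G has_real_derivative - ln x / (u - x)\<^sup>2) (at x)" using d e by simp
  next
    have l: "((\<lambda>v::real. v * ln v) \<longlongrightarrow> 0) (at_right 0)" by real_asymp
    have "(G \<longlongrightarrow> - ((0::real) / (u * (u - 0))) - ln (u - 0) / u) (at_right 0)"
      unfolding G_def using u by (intro tendsto_intros l) auto
    then show "(G \<longlongrightarrow> G 0) (at_right 0)" by (simp add: G_def)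
  qed simp
  moreover have "G 1 - G 0 = ln (u / (u - 1)) / u"
    using u by (simp add: G_def ln_div field_simps)
  ultimately show ?thesis by simp
qed



lemma A_int:
  fixes u :: real
  assumes u: "1 < u"
  shows "((\<lambda>v. 1 / (u\<^sup>2 - v\<^sup>2)\<^sup>2) has_integral (1 / (2 * u\<^sup>2 * (u\<^sup>2 - 1)) + L u / (4 * u^3))) {0..1}"
proof -
  define F where "F = (\<lambda>v::real. v / (2 * u * u * (u * u - v * v)) + (ln (u + v) - ln (u - v)) / (4 * u * u * u))"
  have "((\<lambda>v. 1 / (u\<^sup>2 - v\<^sup>2)\<^sup>2) has_integral (F 1 - F 0)) {0..1}"
  proof (rule fundamental_theorem_of_calculus)
    fix x :: real assume x: "x \<in> {0..1}"
    have ux: "0 < u - x" "0 < u + x" "u * u - x * x \<noteq> 0" "u \<noteq> 0"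
      using x u by (auto simp: mult_strict_mono' square_diff_square_factored)
    have dg: "((\<lambda>v. 2 * u * u * (u * u - v * v)) has_real_derivative (2 * u * u * (0 - (1 * x + 1 * x)))) (at x)"
      by (intro DERIV_cmult DERIV_diff DERIV_const DERIV_mult DERIV_ident)
    have d1: "((\<lambda>v. ln (u + v)) has_real_derivative (inverse (u + x) * (0 + 1))) (at x)"
      by (rule DERIV_chain2[OF DERIV_ln[OF ux(2)] DERIV_add[OF DERIV_const DERIV_ident]])
    have d2: "((\<lambda>v. ln (u - v)) has_real_derivative (inverse (u - x) * (0 - 1))) (at x)"
      by (rule DERIV_chain2[OF DERIV_ln[OF ux(1)] DERIV_diff[OF DERIV_const DERIV_ident]])
    define E where "E = (1 * (2 * u * u * (u * u - x * x)) - x * (2 * u * u * (0 - (1 * x + 1 * x))))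
        / (2 * u * u * (u * u - x * x) * (2 * u * u * (u * u - x * x)))
      + ((inverse (u + x) * (0 + 1) - inverse (u - x) * (0 - 1)) * (4 * u * u * u) - (ln (u + x) - ln (u - x)) * 0)
        / (4 * u * u * u * (4 * u * u * u))"
    have d: "(F has_real_derivative E) (at x)"
      unfolding F_def E_def
      by (rule DERIV_add[OF DERIV_divide[OF DERIV_ident dg] DERIV_divide[OF DERIV_diff[OF d1 d2] DERIV_const]])
         (use ux in auto)
    have e: "E = 1 / (u\<^sup>2 - x\<^sup>2)\<^sup>2"
    proof -
      define s where "s = u * u - x * x"
      have s0: "s \<noteq> 0" using ux by (simp add: s_def)
      have s2: "u\<^sup>2 - x\<^sup>2 = s" by (simp add: s_def power2_eq_square)
      have t1: "(1 * (2 * u * u * (u * u - x * x)) - x * (2 * u * u * (0 - (1 * x + 1 * x))))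
        / (2 * u * u * (u * u - x * x) * (2 * u * u * (u * u - x * x))) = (s + 2 * x * x) / (2 * u * u * s * s)"
        unfolding s_def[symmetric] using s0 ux(4) by (simp add: field_simps)
      have t2: "inverse (u + x) * (0 + 1) - inverse (u - x) * (0 - 1) = 2 * u / s"
        unfolding s_def using ux by (simp add: field_simps)
      have t3: "((2 * u / s) * (4 * u * u * u) - (ln (u + x) - ln (u - x)) * 0)
        / (4 * u * u * u * (4 * u * u * u)) = 1 / (2 * u * u * s)"
        using s0 ux(4) by (simp add: field_simps)
      have "E = (s + 2 * x * x) / (2 * u * u * s * s) + 1 / (2 * u * u * s)"
        unfolding E_def t1 t2 t3 ..
      also have "\<dots> = (s + 2 * x * x + s) / (2 * u * u * s * s)"
        using s0 ux(4) by (simp add: field_simps)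
      also have "s + 2 * x * x + s = 2 * u * u" by (simp add: s_def)
      also have "2 * u * u / (2 * u * u * s * s) = 1 / (s * s)"
        using s0 ux(4) by (simp add: field_simps)
      finally show ?thesis by (simp add: s_def power2_eq_square)
    qed
    have "(F has_real_derivative 1 / (u\<^sup>2 - x\<^sup>2)\<^sup>2) (at x)" using d e by simp
    then show "(F has_vector_derivative 1 / (u\<^sup>2 - x\<^sup>2)\<^sup>2) (at x within {0..1})"
      by (simp add: has_real_derivative_iff_has_vector_derivative[symmetric] has_field_derivative_at_within)
  qed simp
  moreover have "F 1 - F 0 = 1 / (2 * u\<^sup>2 * (u\<^sup>2 - 1)) + L u / (4 * u^3)"
    using u by (simp add: F_def L_def ln_div power2_eq_square power3_eq_cube)
  ultimately show ?thesis by simp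
qed



definition q :: "real \<Rightarrow> real" where "q u = ln u / (u\<^sup>2 - 1)"

lemma D_formula:
  fixes u :: real
  assumes u: "1 < u"
  shows "D u = L u * B0 u - L u * (q u / (2 * u\<^sup>2)) - (L u)\<^sup>2 * (ln u / (4 * u^3))"
proof -
  define A where "A = 1 / (2 * u\<^sup>2 * (u\<^sup>2 - 1)) + L u / (4 * u^3)"
  have i1: "((\<lambda>v. - ln v / (u\<^sup>2 - v\<^sup>2)\<^sup>2) has_integral B0 u) {0..1}"
    unfolding B0_def using B0_int(1)[OF u] by (simp add: has_integral_integral)
  have i2: "((\<lambda>v. ln u * (1 / (u\<^sup>2 - v\<^sup>2)\<^sup>2)) has_integral ln u * A) {0..1}"
    unfolding A_def by (intro has_integral_mult_right A_int u)
  have i3: "((\<lambda>v. - ln v / (u\<^sup>2 - v\<^sup>2)\<^sup>2 - ln u * (1 / (u\<^sup>2 - v\<^sup>2)\<^sup>2)) has_integral (B0 u - ln u * A)) {0..1}"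
    by (rule has_integral_diff[OF i1 i2])
  have i4: "((\<lambda>v. ell u v / (u\<^sup>2 - v\<^sup>2)\<^sup>2) has_integral (B0 u - ln u * A)) {0..1}"
  proof (rule has_integral_spike[OF _ _ i3])
    show "negligible {0::real}" by simp
    fix v :: real assume v: "v \<in> {0..1} - {0}"
    then have v0: "0 < v" by auto
    have "ell u v = - ln u - ln v"
      unfolding ell_def using v0 u by (simp add: ln_div ln_mult)
    then show "ell u v / (u\<^sup>2 - v\<^sup>2)\<^sup>2 = - ln v / (u\<^sup>2 - v\<^sup>2)\<^sup>2 - ln u * (1 / (u\<^sup>2 - v\<^sup>2)\<^sup>2)"
      by (simp add: diff_divide_distrib)
  qed
  then have "D u = L u * (B0 u - ln u * A)" unfolding D_def by (simp add: integral_unique)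
  also have "\<dots> = L u * B0 u - L u * (q u / (2 * u\<^sup>2)) - (L u)\<^sup>2 * (ln u / (4 * u^3))"
    unfolding A_def q_def by (simp add: algebra_simps power2_eq_square)
  finally show ?thesis .
qed



lemma neglog_nonneg: "0 \<le> v \<Longrightarrow> v \<le> 1 \<Longrightarrow> 0 \<le> - ln (v::real)"
  by (cases "v = 0") auto

lemma sq_pos: "1 < (u::real) \<Longrightarrow> v \<in> {0..1} \<Longrightarrow> 0 < u\<^sup>2 - v\<^sup>2"
proof -
  assume u: "1 < u" and v: "v \<in> {0..1}"
  have "v\<^sup>2 \<le> 1" using v mult_left_le[of v v] by (auto simp: power2_eq_square)
  moreover have "1 < u\<^sup>2" using u by (simp add: one_less_power)
  ultimately show ?thesis by simp
qed

lemma B0_nonneg: "1 < u \<Longrightarrow> 0 \<le> B0 u"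
proof -
  assume u: "1 < u"
  have "0 \<le> - ln v / (u\<^sup>2 - v\<^sup>2)\<^sup>2" if "v \<in> {0..1}" for v
    using neglog_nonneg[of v] that by (intro divide_nonneg_nonneg) auto
  then show ?thesis unfolding B0_def using B0_int(1)[OF u] by (intro integral_nonneg) auto
qed

lemma B0_upper:
  fixes u :: real
  assumes u: "1 < u"
  shows "B0 u \<le> L u / u\<^sup>2"
proof -
  have g: "((\<lambda>v. - ln v / (u - v)\<^sup>2 / u\<^sup>2) has_integral ln (u / (u - 1)) / u / u\<^sup>2) {0..1}"
    using has_integral_divide[OF G_int[OF u], of "u\<^sup>2"] by simp
  have pw: "- ln v / (u\<^sup>2 - v\<^sup>2)\<^sup>2 \<le> - ln v / (u - v)\<^sup>2 / u\<^sup>2" if v: "v \<in> {0..1}" for v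
  proof -
    have uv: "0 < u - v" "u \<le> u + v" using u v by auto
    have "(u - v)\<^sup>2 * u\<^sup>2 \<le> (u - v)\<^sup>2 * (u + v)\<^sup>2"
      using uv u by (intro mult_left_mono power_mono) auto
    also have "\<dots> = (u\<^sup>2 - v\<^sup>2)\<^sup>2" by (simp add: power2_eq_square algebra_simps)
    finally have le: "(u - v)\<^sup>2 * u\<^sup>2 \<le> (u\<^sup>2 - v\<^sup>2)\<^sup>2" .
    have pos: "0 < (u - v)\<^sup>2 * u\<^sup>2" using uv u by simp
    have nn: "0 \<le> - ln v" using neglog_nonneg[of v] v by simp
    have "- ln v / (u\<^sup>2 - v\<^sup>2)\<^sup>2 \<le> - ln v / ((u - v)\<^sup>2 * u\<^sup>2)"
    proof (rule divide_left_mono[OF le nn])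
      have p2: "0 < (u\<^sup>2 - v\<^sup>2)\<^sup>2" using pos le by linarith
      show "0 < (u\<^sup>2 - v\<^sup>2)\<^sup>2 * ((u - v)\<^sup>2 * u\<^sup>2)" by (rule mult_pos_pos[OF p2 pos])
    qed
    then show ?thesis by (simp add: divide_divide_eq_left)
  qed
  have "B0 u \<le> integral {0..1} (\<lambda>v. - ln v / (u - v)\<^sup>2 / u\<^sup>2)"
    unfolding B0_def
  proof (rule integral_le)
    show "(\<lambda>v. - ln v / (u\<^sup>2 - v\<^sup>2)\<^sup>2) integrable_on {0..1}" by (rule B0_int(1)[OF u])
    show "(\<lambda>v. - ln v / (u - v)\<^sup>2 / u\<^sup>2) integrable_on {0..1}" using g by (rule has_integral_integrable)
  qed (rule pw)
  also have "\<dots> = ln (u / (u - 1)) / u / u\<^sup>2" using g by (rule integral_unique)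
  also have "\<dots> \<le> L u / u\<^sup>2"
  proof -
    have "ln (u / (u - 1)) \<le> L u" unfolding L_def using u
      by (intro ln_mono) (auto simp: divide_simps)
    moreover have "0 \<le> ln (u / (u - 1))" using u by (simp add: divide_simps)
    moreover have "ln (u / (u - 1)) / u \<le> ln (u / (u - 1)) / 1"
      using u \<open>0 \<le> ln (u / (u - 1))\<close> by (intro divide_left_mono) auto
    ultimately have "ln (u / (u - 1)) / u \<le> L u" by simp
    then show ?thesis using u by (intro divide_right_mono) auto
  qed
  finally show ?thesis .
qed

lemma B0_mono:
  fixes u w :: real
  assumes u: "1 < u" "u \<le> w"
  shows "B0 w \<le> B0 u" and "w * B0 w \<le> u * B0 u"
proof -
  have w: "1 < w" using u by simp
  have pw: "1 / (w\<^sup>2 - v\<^sup>2)\<^sup>2 \<le> 1 / (u\<^sup>2 - v\<^sup>2)\<^sup>2" if v: "v \<in> {0..1}" for v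
  proof -
    have "u\<^sup>2 - v\<^sup>2 \<le> w\<^sup>2 - v\<^sup>2" using u by (simp add: power_mono)
    then show ?thesis using sq_pos[OF u(1) v]
      by (intro divide_left_mono power_mono mult_pos_pos) auto
  qed
  have pw2: "w / (w\<^sup>2 - v\<^sup>2)\<^sup>2 \<le> u / (u\<^sup>2 - v\<^sup>2)\<^sup>2" if v: "v \<in> {0..1}" for v
  proof -
    define a where "a = u\<^sup>2 - v\<^sup>2"
    define b where "b = w\<^sup>2 - v\<^sup>2"
    have a0: "0 < a" using sq_pos[OF u(1) v] by (simp add: a_def)
    have b0: "0 < b" using sq_pos[OF w v] by (simp add: b_def)
    have X: "a * w\<^sup>2 \<le> b * u\<^sup>2"
    proof -
      have "v\<^sup>2 * u\<^sup>2 \<le> v\<^sup>2 * w\<^sup>2" using u by (intro mult_left_mono power_mono) auto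
      then show ?thesis by (simp add: a_def b_def algebra_simps)
    qed
    have Y: "a \<le> b" using u by (simp add: a_def b_def power_mono)
    have "(a * w\<^sup>2) * a \<le> (b * u\<^sup>2) * b"
      by (rule mult_mono[OF X Y]) (use a0 b0 in auto)
    then have h3: "(a * a) * (w * w) \<le> (b * b) * (u * u)" by (simp add: power2_eq_square mult_ac)
    have "(b * b) * (u * u) \<le> (b * b) * (u * w)" using u by (intro mult_left_mono) auto
    with h3 have "((a * a) * w) * w \<le> ((b * b) * u) * w" by (simp add: mult_ac)
    then have h4: "(a * a) * w \<le> (b * b) * u" using u by simp
    have "w / (b * b) \<le> u / (a * a)" using h4 a0 b0 by (simp add: divide_simps mult_ac)
    then show ?thesis by (simp add: a_def b_def power2_eq_square)
  qed
  show "B0 w \<le> B0 u"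
    unfolding B0_def
  proof (rule integral_le[OF B0_int(1)[OF w] B0_int(1)[OF u(1)]])
    fix v :: real assume v: "v \<in> {0..1}"
    have nn: "0 \<le> - ln v" using neglog_nonneg[of v] v by simp
    have "- ln v * (1 / (w\<^sup>2 - v\<^sup>2)\<^sup>2) \<le> - ln v * (1 / (u\<^sup>2 - v\<^sup>2)\<^sup>2)"
      by (rule mult_left_mono[OF pw[OF v] nn])
    then show "- ln v / (w\<^sup>2 - v\<^sup>2)\<^sup>2 \<le> - ln v / (u\<^sup>2 - v\<^sup>2)\<^sup>2" by simp
  qed
  have eqx: "x * B0 x = integral {0..1} (\<lambda>v. - ln v * x / (x\<^sup>2 - v\<^sup>2)\<^sup>2)" for x
  proof -
    have "(\<lambda>v. - ln v * x / (x\<^sup>2 - v\<^sup>2)\<^sup>2) = (\<lambda>v. x * (- ln v / (x\<^sup>2 - v\<^sup>2)\<^sup>2))"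
      by (rule ext) simp
    then show ?thesis unfolding B0_def by (simp only: integral_mult_right)
  qed
  show "w * B0 w \<le> u * B0 u"
    unfolding eqx
  proof (rule integral_le[OF B0_int(2)[OF w] B0_int(2)[OF u(1)]])
    fix v :: real assume v: "v \<in> {0..1}"
    have nn: "0 \<le> - ln v" using neglog_nonneg[of v] v by simp
    have "- ln v * (w / (w\<^sup>2 - v\<^sup>2)\<^sup>2) \<le> - ln v * (u / (u\<^sup>2 - v\<^sup>2)\<^sup>2)"
      by (rule mult_left_mono[OF pw2[OF v] nn])
    then show "- ln v * w / (w\<^sup>2 - v\<^sup>2)\<^sup>2 \<le> - ln v * u / (u\<^sup>2 - v\<^sup>2)\<^sup>2" by simp
  qed
qed



lemma q_nonneg: "1 < u \<Longrightarrow> 0 \<le> q u"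
  unfolding q_def by (intro divide_nonneg_pos) (auto simp: one_less_power)

lemma q_le: "1 < u \<Longrightarrow> q u \<le> 1 / (u + 1)"
proof -
  assume u: "1 < u"
  have d: "0 < u\<^sup>2 - 1" using u by (simp add: one_less_power)
  have "ln u \<le> u - 1" using ln_le_minus_one[of u] u by simp
  then have "q u \<le> (u - 1) / (u\<^sup>2 - 1)" unfolding q_def using d by (intro divide_right_mono) auto
  also have "\<dots> = 1 / (u + 1)"
  proof -
    have uu: "u * u - 1 \<noteq> 0" using d by (simp add: power2_eq_square)
    have "u * u - 1 = (u - 1) * (u + 1)" by (simp add: algebra_simps)
    then show ?thesis using u uu by (simp add: power2_eq_square)
  qed
  finally show ?thesis .
qed

lemma q_mono: "1 < u \<Longrightarrow> u \<le> w \<Longrightarrow> q w \<le> q u"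
proof -
  assume u: "1 < u" "u \<le> w"
  show ?thesis
  proof (rule DERIV_nonpos_imp_nonincreasing[OF u(2)])
    fix x :: real assume x: "u \<le> x" "x \<le> w"
    then have x1: "1 < x" using u by simp
    have x2: "1 < x\<^sup>2" using x1 by (simp add: one_less_power)
    have d0: "x\<^sup>2 - 1 \<noteq> 0" using x2 by simp
    have d1: "x\<^sup>2 \<noteq> 1" using d0 by simp
    have dd: "((\<lambda>x. x\<^sup>2 - 1) has_real_derivative 2 * x) (at x)"
      by (auto intro!: derivative_eq_intros)
    have dq: "(q has_real_derivative (inverse x * (x\<^sup>2 - 1) - ln x * (2 * x)) / ((x\<^sup>2 - 1) * (x\<^sup>2 - 1))) (at x)"
      unfolding q_def[abs_def]
      by (rule DERIV_divide[OF DERIV_ln[of x] dd]) (use x1 d0 d1 in auto)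
    have key: "inverse x * (x\<^sup>2 - 1) \<le> ln x * (2 * x)"
    proof -
      have "ln (inverse (x\<^sup>2)) \<le> inverse (x\<^sup>2) - 1" using x1 by (intro ln_le_minus_one) simp
      moreover have "ln (inverse (x\<^sup>2)) = - 2 * ln x" using x1 by (simp add: ln_inverse ln_realpow)
      ultimately have "1 - inverse (x\<^sup>2) \<le> 2 * ln x" by simp
      then have "x * (1 - inverse (x\<^sup>2)) \<le> x * (2 * ln x)" using x1 by (intro mult_left_mono) auto
      moreover have "x * (1 - inverse (x\<^sup>2)) = inverse x * (x\<^sup>2 - 1)" using x1
        by (simp add: field_simps power2_eq_square)
      ultimately show ?thesis by (simp add: mult_ac)
    qed
    have "(inverse x * (x\<^sup>2 - 1) - ln x * (2 * x)) / ((x\<^sup>2 - 1) * (x\<^sup>2 - 1)) \<le> 0"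
      using key by (intro divide_nonpos_nonneg) auto
    then show "\<exists>y. (q has_real_derivative y) (at x) \<and> y \<le> 0" using dq by blast
  qed
qed

lemma g_props:
  fixes n :: nat
  assumes n: "1 \<le> n"
  shows "\<And>u::real. 1 < u \<Longrightarrow> \<bar>ln u / (4 * u ^ n)\<bar> \<le> 1"
    and "\<And>u w::real. 1 < u \<Longrightarrow> 1 < w \<Longrightarrow> \<bar>ln u / (4 * u ^ n) - ln w / (4 * w ^ n)\<bar> \<le> real (n + 1) * \<bar>u - w\<bar>"
    and "continuous_on {1<..} (\<lambda>u::real. ln u / (4 * u ^ n))"
proof -
  show "\<bar>ln u / (4 * u ^ n)\<bar> \<le> 1" if u: "1 < u" for u :: real
  proof -
    have "0 \<le> ln u" "ln u \<le> u" using u ln_le_minus_one[of u] by auto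
    moreover have "u \<le> u ^ n" using u n by (metis less_imp_le power_increasing power_one_right)
    ultimately show ?thesis using u by (simp add: abs_of_nonneg divide_simps)
  qed
  show "continuous_on {1<..} (\<lambda>u::real. ln u / (4 * u ^ n))"
    by (intro continuous_intros) auto
  define g' where "g' = (\<lambda>x::real. (inverse x * (4 * x ^ n) - ln x * (4 * (real n * x ^ (n - Suc 0)))) / (4 * x ^ n * (4 * x ^ n)))"
  have dg: "((\<lambda>u. ln u / (4 * u ^ n)) has_field_derivative g' x) (at x within {1<..})" if x: "x \<in> {1<..}" for x :: real
  proof -
    have "((\<lambda>u. ln u / (4 * u ^ n)) has_field_derivative g' x) (at x)"
      unfolding g'_def
      by (rule DERIV_divide[OF DERIV_ln DERIV_cmult[OF DERIV_pow]]) (use x in auto)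
    then show ?thesis by (rule has_field_derivative_at_within)
  qed
  have bg: "norm (g' x) \<le> real (n + 1)" if x: "x \<in> {1<..}" for x :: real
  proof -
    obtain m where m: "n = Suc m" using n by (cases n) auto
    have x1: "1 < x" using x by simp
    have xp: "0 < x ^ m" using x1 by simp
    have e: "g' x = (1 - real n * ln x) / (4 * x ^ (n + 1))"
      unfolding g'_def m power_Suc using x1 xp by (simp add: field_simps)
    have ab: "\<bar>1 - real n * ln x\<bar> \<le> real (n + 1) * x"
    proof -
      have l: "0 \<le> ln x" "ln x \<le> x" using x1 ln_le_minus_one[of x] by auto
      then have "real n * ln x \<le> real n * x" by (intro mult_left_mono) auto
      moreover have "0 \<le> real n * ln x" using l by simp
      moreover have "0 \<le> real n * x" using x1 by simp
      moreover have "real (n + 1) * x = real n * x + x" by (simp add: algebra_simps)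
      ultimately show ?thesis using x1 unfolding abs_le_iff by linarith
    qed
    have xx: "x \<le> 4 * x ^ (n + 1)"
    proof -
      have "x ^ 1 \<le> x ^ (n + 1)" using x1 by (intro power_increasing) auto
      moreover have "0 \<le> x ^ (n + 1)" using x1 by simp
      ultimately show ?thesis by simp
    qed
    have "norm (g' x) = \<bar>1 - real n * ln x\<bar> / (4 * x ^ (n + 1))"
      using e x1 by (simp add: abs_divide)
    also have "\<dots> \<le> real (n + 1) * x / (4 * x ^ (n + 1))"
      using ab x1 by (intro divide_right_mono) auto
    also have "\<dots> \<le> real (n + 1) * x / x"
      using xx x1 by (intro divide_left_mono mult_pos_pos) auto
    also have "\<dots> = real (n + 1)" using x1 by simp
    finally show ?thesis .
  qed
  show "\<bar>ln u / (4 * u ^ n) - ln w / (4 * w ^ n)\<bar> \<le> real (n + 1) * \<bar>u - w\<bar>" if "1 < u" "1 < w" for u w :: real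
    using field_differentiable_bound[OF convex_real_interval(3) dg bg, of u w] that by simp
qed



lemma piece_L:
  fixes gb h \<tau> :: "real \<Rightarrow> real" and M K :: real
  assumes gbnn: "\<And>u. 1 < u \<Longrightarrow> 0 \<le> gb u"
    and gble: "\<And>u. 1 < u \<Longrightarrow> gb u \<le> L u"
    and gbmono: "\<And>u w. 1 < u \<Longrightarrow> u \<le> w \<Longrightarrow> gb w \<le> gb u"
    and hM: "\<And>u. 1 < u \<Longrightarrow> \<bar>h u\<bar> \<le> M"
    and hK: "\<And>u w. 1 < u \<Longrightarrow> 1 < w \<Longrightarrow> \<bar>h u - h w\<bar> \<le> K * \<bar>u - w\<bar>"
    and hcont: "continuous_on {1<..} h"
    and tc: "\<And>t. isCont \<tau> t" and tb: "\<And>t. \<bar>\<tau> t\<bar> \<le> 1" and tpi: "\<And>t. \<tau> (t + pi) = - \<tau> t"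
    and M0: "0 \<le> M" and K0: "0 \<le> K"
  shows "(\<lambda>u. L u * gb u * h u * \<tau> (u*y)) integrable_on {1<..}"
    and "pi \<le> y \<Longrightarrow> \<bar>integral {1<..} (\<lambda>u. L u * gb u * h u * \<tau> (u*y))\<bar> \<le> (M*1 + K*1*IL/2) * Psi y"
proof -
  have bnn: "0 \<le> L u * gb u" if "1 < u" for u
    using L_pos[OF that] gbnn[OF that] by simp
  have ble: "L u * gb u \<le> 1 * (L u)\<^sup>2" if "1 < u" for u
    using L_pos[OF that] gble[OF that] by (simp add: power2_eq_square mult_left_mono)
  have bmono: "L w * gb w \<le> L u * gb u" if "1 < u" "u \<le> w" for u w
    using L_mono[OF that] gbmono[OF that] L_pos[of u] L_pos[of w] gbnn[of w] that
    by (intro mult_mono) auto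
  note P = piece[of "\<lambda>u. L u * gb u" 1 h M K \<tau>, OF bnn ble bmono hM hK hcont tc tb tpi M0 K0]
  show "(\<lambda>u. L u * gb u * h u * \<tau> (u*y)) integrable_on {1<..}" using P(1) by simp
  show "pi \<le> y \<Longrightarrow> \<bar>integral {1<..} (\<lambda>u. L u * gb u * h u * \<tau> (u*y))\<bar> \<le> (M*1 + K*1*IL/2) * Psi y"
    using P(2) by simp
qed

lemma one_props:
  shows "\<And>u. 1 < u \<Longrightarrow> \<bar>(\<lambda>u::real. 1::real) u\<bar> \<le> 1"
    and "\<And>u w. 1 < u \<Longrightarrow> 1 < w \<Longrightarrow> \<bar>(\<lambda>u::real. 1::real) u - (\<lambda>u. 1) w\<bar> \<le> 0 * \<bar>u - w\<bar>"
    and "continuous_on {1<..} (\<lambda>u::real. 1::real)"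
  by auto

lemma L_le_L: "1 < u \<Longrightarrow> L u \<le> L u" by simp

lemma B0_props:
  shows "\<And>u. 1 < u \<Longrightarrow> B0 u \<le> L u" and "\<And>u. 1 < u \<Longrightarrow> u * B0 u \<le> L u"
proof -
  fix u :: real assume u: "1 < u"
  have Lp: "0 \<le> L u" using L_pos[OF u] by simp
  have b: "B0 u \<le> L u / u\<^sup>2" by (rule B0_upper[OF u])
  have "L u / u\<^sup>2 \<le> L u / 1" using u Lp by (intro divide_left_mono) (auto simp: one_le_power)
  then show "B0 u \<le> L u" using b by simp
  have "u * B0 u \<le> u * (L u / u\<^sup>2)" using b u by (intro mult_left_mono) auto
  also have "\<dots> = L u / u" using u by (simp add: power2_eq_square)
  also have "\<dots> \<le> L u / 1" using u Lp by (intro divide_left_mono) auto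
  finally show "u * B0 u \<le> L u" by simp
qed

lemma qk_props:
  fixes k :: nat
  assumes k: "1 \<le> k"
  shows "\<And>u. 1 < u \<Longrightarrow> 0 \<le> q u / (2 * u ^ k)"
    and "\<And>u. 1 < u \<Longrightarrow> q u / (2 * u ^ k) \<le> L u"
    and "\<And>u w. 1 < u \<Longrightarrow> u \<le> w \<Longrightarrow> q w / (2 * w ^ k) \<le> q u / (2 * u ^ k)"
proof -
  fix u :: real assume u: "1 < u"
  show "0 \<le> q u / (2 * u ^ k)" using q_nonneg[OF u] u by simp
  have uk: "1 \<le> u ^ k" using u by (simp add: one_le_power)
  have "q u / (2 * u ^ k) \<le> q u / 1"
  proof (rule divide_left_mono)
    show "1 \<le> 2 * u ^ k" using uk by linarith
    show "0 \<le> q u" using q_nonneg[OF u] .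
    show "0 < 2 * u ^ k * 1" using uk by linarith
  qed
  also have "\<dots> \<le> 1 / (u + 1)" using q_le[OF u] by simp
  also have "\<dots> \<le> L u"
  proof -
    have "1 / (u + 1) \<le> 2 / (u + 1)" using u by (simp add: divide_right_mono)
    then show ?thesis using L_lower[OF u] by simp
  qed
  finally show "q u / (2 * u ^ k) \<le> L u" .
next
  fix u w :: real assume u: "1 < u" "u \<le> w"
  have "u ^ k \<le> w ^ k" using u by (intro power_mono) auto
  then show "q w / (2 * w ^ k) \<le> q u / (2 * u ^ k)"
    using q_mono[OF u] q_nonneg[of w] q_nonneg[of u] u
    by (intro frac_le) auto
qed



lemma Psi_bigo: "Psi \<in> O[at_top](\<lambda>y. (ln y)\<^sup>2 / y)"
  unfolding Psi_def[abs_def] Phi_def by real_asymp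

lemma landau_from_bound:
  fixes F :: "real \<Rightarrow> real"
  assumes "\<And>y. pi \<le> y \<Longrightarrow> \<bar>F y\<bar> \<le> A * Psi y"
  shows "F \<in> O[at_top](\<lambda>y. (ln y)\<^sup>2 / y)"
proof -
  have "eventually (\<lambda>y. norm (F y) \<le> A * norm (Psi y)) at_top"
  proof (rule eventually_at_top_linorderI[of pi])
    fix y :: real assume y: "pi \<le> y"
    have y0: "0 < y" using y pi_gt_zero by linarith
    have "0 \<le> Psi y" unfolding Psi_def using Phi_nonneg[of "pi/y"] y y0 by simp
    then show "norm (F y) \<le> A * norm (Psi y)" using assms[OF y] by simp
  qed
  then have "F \<in> O[at_top](Psi)" by (rule bigoI)
  then show ?thesis using Psi_bigo by (rule landau_o.big_trans)
qed

lemma combine3: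
  fixes F f1 f2 f3 :: "real \<Rightarrow> real"
  assumes "f1 integrable_on S" "f2 integrable_on S" "f3 integrable_on S"
    and "\<And>x. x \<in> S \<Longrightarrow> F x = f1 x - f2 x - f3 x"
  shows "F integrable_on S" "integral S F = integral S f1 - integral S f2 - integral S f3"
proof -
  have i: "(\<lambda>x. f1 x - f2 x - f3 x) integrable_on S"
    using assms by (intro integrable_diff) auto
  show "F integrable_on S" using integrable_eq[OF i] assms(4) by metis
  have "integral S F = integral S (\<lambda>x. f1 x - f2 x - f3 x)"
    using assms(4) by (intro integral_cong) auto
  also have "\<dots> = integral S f1 - integral S f2 - integral S f3"
    using assms(1-3) by (simp add: integral_diff integrable_diff)
  finally show "integral S F = integral S f1 - integral S f2 - integral S f3" .
qed

lemma L_nonneg: "1 < u \<Longrightarrow> 0 \<le> L u" using L_pos[of u] by simp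

lemma uB0_nonneg: "1 < u \<Longrightarrow> 0 \<le> u * B0 u"
  using B0_nonneg[of u] by simp

lemma main_tau:
  fixes \<tau> :: "real \<Rightarrow> real"
  assumes tc: "\<And>t. isCont \<tau> t" and tb: "\<And>t. \<bar>\<tau> t\<bar> \<le> 1" and tpi: "\<And>t. \<tau> (t + pi) = - \<tau> t"
  shows "\<And>y. (\<lambda>u. D u * \<tau> (u*y)) integrable_on {1<..}"
    and "\<And>y. (\<lambda>u. u * D u * \<tau> (u*y)) integrable_on {1<..}"
    and "(\<lambda>y. integral {1<..} (\<lambda>u. D u * \<tau> (u*y))) \<in> O[at_top](\<lambda>y. (ln y)\<^sup>2 / y)"
    and "(\<lambda>y. integral {1<..} (\<lambda>u. u * D u * \<tau> (u*y))) \<in> O[at_top](\<lambda>y. (ln y)\<^sup>2 / y)"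
proof -
  have z: "(0::real) \<le> 0" "(0::real) \<le> 1" by auto
  have K4: "(0::real) \<le> real (3 + 1)" and K3: "(0::real) \<le> real (2 + 1)" by auto
  have le3: "1 \<le> (3::nat)" and le2: "1 \<le> (2::nat)" and le1: "1 \<le> (1::nat)" by auto
  note g3 = g_props[OF le3] and g2 = g_props[OF le2]
  note q2 = qk_props[OF le2] and q1 = qk_props[OF le1]
  have P1a: "(\<lambda>u. L u * B0 u * 1 * \<tau> (u*y)) integrable_on {1<..}" for y
    by (rule piece_L(1)[where gb="B0" and h="\<lambda>u. 1" and M="1" and K="0" and \<tau>=\<tau>], (blast intro: B0_nonneg B0_props(1) B0_mono(1) tc tb tpi | simp add: tb tpi)+)
  have P1b: "pi \<le> y \<Longrightarrow> \<bar>integral {1<..} (\<lambda>u. L u * B0 u * 1 * \<tau> (u*y))\<bar> \<le> (1*1 + 0*1*IL/2) * Psi y" for y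
    by (rule piece_L(2)[where gb="B0" and h="\<lambda>u. 1" and M="1" and K="0" and \<tau>=\<tau>], (blast intro: B0_nonneg B0_props(1) B0_mono(1) tc tb tpi | simp add: tb tpi)+)
  have P2a: "(\<lambda>u. L u * (q u / (2 * u ^ 2)) * 1 * \<tau> (u*y)) integrable_on {1<..}" for y
    by (rule piece_L(1)[where gb="\<lambda>u. q u / (2 * u ^ 2)" and h="\<lambda>u. 1" and M="1" and K="0" and \<tau>=\<tau>], (blast intro: q2 tc tb tpi | simp add: tb tpi)+)
  have P2b: "pi \<le> y \<Longrightarrow> \<bar>integral {1<..} (\<lambda>u. L u * (q u / (2 * u ^ 2)) * 1 * \<tau> (u*y))\<bar> \<le> (1*1 + 0*1*IL/2) * Psi y" for y
    by (rule piece_L(2)[where gb="\<lambda>u. q u / (2 * u ^ 2)" and h="\<lambda>u. 1" and M="1" and K="0" and \<tau>=\<tau>], (blast intro: q2 tc tb tpi | simp add: tb tpi)+)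
  have P3a: "(\<lambda>u. L u * L u * (ln u / (4 * u ^ 3)) * \<tau> (u*y)) integrable_on {1<..}" for y
    by (rule piece_L(1)[where gb="L" and h="\<lambda>u. ln u / (4 * u ^ 3)" and M="1" and K="real (3+1)" and \<tau>=\<tau>], (blast intro: g3 L_mono L_nonneg L_le_L tc tb tpi | simp add: tb tpi)+)
  have P3b: "pi \<le> y \<Longrightarrow> \<bar>integral {1<..} (\<lambda>u. L u * L u * (ln u / (4 * u ^ 3)) * \<tau> (u*y))\<bar> \<le> (1*1 + real (3+1)*1*IL/2) * Psi y" for y
    by (rule piece_L(2)[where gb="L" and h="\<lambda>u. ln u / (4 * u ^ 3)" and M="1" and K="real (3+1)" and \<tau>=\<tau>], (blast intro: g3 L_mono L_nonneg L_le_L tc tb tpi | simp add: tb tpi)+)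
  have P4a: "(\<lambda>u. L u * (u * B0 u) * 1 * \<tau> (u*y)) integrable_on {1<..}" for y
    by (rule piece_L(1)[where gb="\<lambda>u. u * B0 u" and h="\<lambda>u. 1" and M="1" and K="0" and \<tau>=\<tau>], (blast intro: uB0_nonneg B0_props(2) B0_mono(2) tc tb tpi | simp add: tb tpi)+)
  have P4b: "pi \<le> y \<Longrightarrow> \<bar>integral {1<..} (\<lambda>u. L u * (u * B0 u) * 1 * \<tau> (u*y))\<bar> \<le> (1*1 + 0*1*IL/2) * Psi y" for y
    by (rule piece_L(2)[where gb="\<lambda>u. u * B0 u" and h="\<lambda>u. 1" and M="1" and K="0" and \<tau>=\<tau>], (blast intro: uB0_nonneg B0_props(2) B0_mono(2) tc tb tpi | simp add: tb tpi)+)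
  have P5a: "(\<lambda>u. L u * (q u / (2 * u ^ 1)) * 1 * \<tau> (u*y)) integrable_on {1<..}" for y
    by (rule piece_L(1)[where gb="\<lambda>u. q u / (2 * u ^ 1)" and h="\<lambda>u. 1" and M="1" and K="0" and \<tau>=\<tau>], (blast intro: q1 tc tb tpi | simp add: tb tpi)+)
  have P5b: "pi \<le> y \<Longrightarrow> \<bar>integral {1<..} (\<lambda>u. L u * (q u / (2 * u ^ 1)) * 1 * \<tau> (u*y))\<bar> \<le> (1*1 + 0*1*IL/2) * Psi y" for y
    by (rule piece_L(2)[where gb="\<lambda>u. q u / (2 * u ^ 1)" and h="\<lambda>u. 1" and M="1" and K="0" and \<tau>=\<tau>], (blast intro: q1 tc tb tpi | simp add: tb tpi)+)
  have P6a: "(\<lambda>u. L u * L u * (ln u / (4 * u ^ 2)) * \<tau> (u*y)) integrable_on {1<..}" for y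
    by (rule piece_L(1)[where gb="L" and h="\<lambda>u. ln u / (4 * u ^ 2)" and M="1" and K="real (2+1)" and \<tau>=\<tau>], (blast intro: g2 L_mono L_nonneg L_le_L tc tb tpi | simp add: tb tpi)+)
  have P6b: "pi \<le> y \<Longrightarrow> \<bar>integral {1<..} (\<lambda>u. L u * L u * (ln u / (4 * u ^ 2)) * \<tau> (u*y))\<bar> \<le> (1*1 + real (2+1)*1*IL/2) * Psi y" for y
    by (rule piece_L(2)[where gb="L" and h="\<lambda>u. ln u / (4 * u ^ 2)" and M="1" and K="real (2+1)" and \<tau>=\<tau>], (blast intro: g2 L_mono L_nonneg L_le_L tc tb tpi | simp add: tb tpi)+)
  have eqD: "D u * \<tau> (u*y) = L u * B0 u * 1 * \<tau> (u*y) - L u * (q u / (2 * u ^ 2)) * 1 * \<tau> (u*y)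
              - L u * L u * (ln u / (4 * u ^ 3)) * \<tau> (u*y)" if "u \<in> {1<..}" for u y
  proof -
    have u: "1 < u" "u \<noteq> 0" using that by auto
    show ?thesis unfolding D_formula[OF u(1)] using u by (simp add: field_simps power2_eq_square)
  qed
  have equD: "u * D u * \<tau> (u*y) = L u * (u * B0 u) * 1 * \<tau> (u*y) - L u * (q u / (2 * u ^ 1)) * 1 * \<tau> (u*y)
              - L u * L u * (ln u / (4 * u ^ 2)) * \<tau> (u*y)" if "u \<in> {1<..}" for u y
  proof -
    have u0: "u \<noteq> 0" using that by auto
    have u1: "1 < u" using that by auto
    show ?thesis unfolding D_formula[OF u1] using u0 by (simp add: field_simps power2_eq_square power3_eq_cube)
  qed
  show "(\<lambda>u. D u * \<tau> (u*y)) integrable_on {1<..}" for y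
    by (rule combine3(1)[OF P1a P2a P3a]) (rule eqD)
  show "(\<lambda>u. u * D u * \<tau> (u*y)) integrable_on {1<..}" for y
    by (rule combine3(1)[OF P4a P5a P6a]) (rule equD)
  have tri: "\<bar>a - b - c\<bar> \<le> \<bar>a\<bar> + \<bar>b\<bar> + \<bar>c\<bar>" for a b c :: real by linarith
  show "(\<lambda>y. integral {1<..} (\<lambda>u. D u * \<tau> (u*y))) \<in> O[at_top](\<lambda>y. (ln y)\<^sup>2 / y)"
  proof (rule landau_from_bound)
    fix y :: real assume y: "pi \<le> y"
    have e: "integral {1<..} (\<lambda>u. D u * \<tau> (u*y)) =
      integral {1<..} (\<lambda>u. L u * B0 u * 1 * \<tau> (u*y)) - integral {1<..} (\<lambda>u. L u * (q u / (2 * u ^ 2)) * 1 * \<tau> (u*y))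
      - integral {1<..} (\<lambda>u. L u * L u * (ln u / (4 * u ^ 3)) * \<tau> (u*y))"
      by (rule combine3(2)[OF P1a P2a P3a]) (rule eqD)
    show "\<bar>integral {1<..} (\<lambda>u. D u * \<tau> (u*y))\<bar> \<le> ((1*1 + 0*1*IL/2) + (1*1 + 0*1*IL/2) + (1*1 + real (3+1)*1*IL/2)) * Psi y"
      unfolding e using tri P1b[OF y] P2b[OF y] P3b[OF y] by (simp only: distrib_right; linarith?)
  qed
  show "(\<lambda>y. integral {1<..} (\<lambda>u. u * D u * \<tau> (u*y))) \<in> O[at_top](\<lambda>y. (ln y)\<^sup>2 / y)"
  proof (rule landau_from_bound)
    fix y :: real assume y: "pi \<le> y"
    have e: "integral {1<..} (\<lambda>u. u * D u * \<tau> (u*y)) =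
      integral {1<..} (\<lambda>u. L u * (u * B0 u) * 1 * \<tau> (u*y)) - integral {1<..} (\<lambda>u. L u * (q u / (2 * u ^ 1)) * 1 * \<tau> (u*y))
      - integral {1<..} (\<lambda>u. L u * L u * (ln u / (4 * u ^ 2)) * \<tau> (u*y))"
      by (rule combine3(2)[OF P4a P5a P6a]) (rule equD)
    show "\<bar>integral {1<..} (\<lambda>u. u * D u * \<tau> (u*y))\<bar> \<le> ((1*1 + 0*1*IL/2) + (1*1 + 0*1*IL/2) + (1*1 + real (2+1)*1*IL/2)) * Psi y"
      unfolding e using tri P4b[OF y] P5b[OF y] P6b[OF y] by (simp only: distrib_right; linarith?)
  qed
qed


theorem proposition4:
  shows "(\<forall>y::real. (\<lambda>u. D u * cos (u * y)) integrable_on {1<..}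
                    \<and> (\<lambda>u. u * D u * sin (u * y)) integrable_on {1<..})
    \<and> (\<lambda>y. integral {1<..} (\<lambda>u. D u * cos (u * y))) \<in> O[at_top](\<lambda>y. (ln y)\<^sup>2 / y)
    \<and> (\<lambda>y. integral {1<..} (\<lambda>u. u * D u * sin (u * y))) \<in> O[at_top](\<lambda>y. (ln y)\<^sup>2 / y)"
proof -
  note C = main_tau[of cos, OF isCont_cos abs_cos_le_one cos_periodic_pi]
  note S = main_tau[of sin, OF isCont_sin abs_sin_le_one sin_periodic_pi]
  show ?thesis using C(1) S(2) C(3) S(4) by blast
qed

end
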